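(* Let $s$ be a positive integer such that $(s-\bar k)>(\bar k+1)\big[(\sqrt{\rho_+(s)/\rho_-(s)}+1)\frac{2\rho_+(1)}{\rho_-(s)}\big]^2$, and run Algorithm FoBa-gdt with $\epsilon>\frac{2\sqrt2\rho_+(1)}{\rho_-(s)}\|\nabla Q(\bar\beta)\|_\infty$. Let $\beta^{(k)}$ be the output and $F^{(k)}$ its support. Let $\gamma=\frac{2\sqrt2\,\epsilon}{\rho_-(s)}$ and $\bar\Delta=|\{j\in\bar F-F^{(k)}:|\bar\beta_j|<\gamma\}|$. Then $$\|\beta^{(k)}-\bar\beta\|^2\le\frac{8\epsilon^2}{\rho_-(s)^2}\bar\Delta,\qquad Q(\beta^{(k)})-Q(\bar\beta)\le\frac{\epsilon^2}{\rho_-(s)}\bar\Delta,$$ $$\frac{\rho_-(s)^2}{8\rho_+(1)^2}|F^{(k)}-\bar F|\le|\bar F-F^{(k)}|\le2\bar\Delta.$$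
   Context: Let $Q:\mathbb{R}^d\to\mathbb{R}$ be convex and continuously differentiable. $e_j$ is the $j$-th standard basis vector, $\mathrm{supp}(\beta)=\{j:\beta_j\ne0\}$, $\|\beta\|_0=|\mathrm{supp}(\beta)|$, $\|\cdot\|$ is the Euclidean norm, $A-B$ is set difference, and $v_S$ is $v$ restricted to the coordinates in $S$. For $F\subseteq\{1,\dots,d\}$, $\hat\beta(F)$ denotes a minimizer of $Q$ over $\{\beta:\mathrm{supp}(\beta)\subseteq F\}$ (assumed to exist). For a positive integer $s$, the restricted strong convexity constants $\rho_-(s),\rho_+(s)>0$ are constants such that for all $\beta,\beta'\in\mathbb{R}^d$ with $\|\beta'-\beta\|_0\le s$: $\frac{\rho_-(s)}{2}\|\beta'-\beta\|^2\le Q(\beta')-Q(\beta)-\langle\nabla Q(\beta),\beta'-\beta\rangle\le\frac{\rho_+(s)}{2}\|\beta'-\beta\|^2.$ $\bar\beta$ is a solution of $\min_\beta Q(\beta)$ subject to $\|\beta\|_0\le\bar k$, $\bar F=\mathrm{supp}(\bar\beta)$ and $\bar k=|\bar F|$. Algorithm FoBa has two variants: FoBa-obj (parameter $\delta>0$) and FoBa-gdt (parameter $\epsilon>0$). Initialize $F^{(0)}=\emptyset$, $\beta^{(0)}=0$, $k=0$, and repeat the following iteration. (1) Stopping test: FoBa-obj stops if $Q(\beta^{(k)})-\min_{\alpha\in\mathbb{R},\,j\notin F^{(k)}}Q(\beta^{(k)}+\alpha e_j)<\delta$; FoBa-gdt stops if $\|\nabla Q(\beta^{(k)})\|_\infty<\epsilon$.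 On stopping the output is $\beta^{(k)}$ with support $F^{(k)}$, and the algorithm is said to terminate at $k$. (2) Forward step: FoBa-obj picks $i^{(k)}\in\arg\min_{i\notin F^{(k)}}\min_\alpha Q(\beta^{(k)}+\alpha e_i)$; FoBa-gdt picks $i^{(k)}\in\arg\max_{i\notin F^{(k)}}|\nabla Q(\beta^{(k)})_i|$. Set $F^{(k+1)}=F^{(k)}\cup\{i^{(k)}\}$, $\beta^{(k+1)}=\hat\beta(F^{(k+1)})$, $\delta^{(k+1)}=Q(\beta^{(k)})-Q(\beta^{(k+1)})$, $k\leftarrow k+1$. (3) Backward step: repeat — if $F^{(k)}=\emptyset$ or $\min_{i\in F^{(k)}}Q(\beta^{(k)}-\beta^{(k)}_ie_i)-Q(\beta^{(k)})\ge\delta^{(k)}/2$, leave the backward step; otherwise pick $j\in\arg\min_{i\in F^{(k)}}Q(\beta^{(k)}-\beta^{(k)}_ie_i)$, set $F^{(k-1)}=F^{(k)}-\{j\}$, $\beta^{(k-1)}=\hat\beta(F^{(k-1)})$, $k\leftarrow k-1$ (where $\delta^{(k-1)}$ is the value recorded at the most recent forward step producing index $k-1$). Thus $|F^{(k)}|=k$ always. "At the beginning of an iteration" means the state just before a stopping test. *)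

theory Defs
  imports "HOL-Analysis.Analysis"
begin

text \<open>Vectors in R^d are modelled as real^'n with a finite index type 'n (d = CARD('n)).
  The gradient of Q is a given function g with (Q has_derivative (\<lambda>h. g x \<bullet> h)) (at x).\<close>

definition supp :: "real^'n \<Rightarrow> 'n set" where
  "supp b = {j. b $ j \<noteq> 0}"

text \<open>Restricted strong convexity / smoothness with constants lo = rho_-(s), hi = rho_+(s).\<close>
definition rsc :: "(real^'n \<Rightarrow> real) \<Rightarrow> (real^'n \<Rightarrow> real^'n) \<Rightarrow> nat \<Rightarrow> real \<Rightarrow> real \<Rightarrow> bool" where
  "rsc Q g s lo hi \<longleftrightarrow> lo > 0 \<and> hi > 0 \<and>
     (\<forall>b b'. card (supp (b' - b)) \<le> s \<longrightarrow>
        lo / 2 * (norm (b' - b))\<^sup>2 \<le> Q b' - Q b - g b \<bullet> (b' - b) \<and>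
        Q b' - Q b - g b \<bullet> (b' - b) \<le> hi / 2 * (norm (b' - b))\<^sup>2)"

text \<open>b is a minimizer of Q over vectors supported in F (a possible value of hat-beta(F)).\<close>
definition restr_min :: "(real^'n \<Rightarrow> real) \<Rightarrow> 'n set \<Rightarrow> real^'n \<Rightarrow> bool" where
  "restr_min Q F b \<longleftrightarrow> supp b \<subseteq> F \<and> (\<forall>b'. supp b' \<subseteq> F \<longrightarrow> Q b \<le> Q b')"

text \<open>Algorithm state: (F^(k), beta^(k), ds) where ds ! (i-1) = delta^(i) for i = 1..k
  (the value recorded at the most recent forward step producing index i).\<close>
type_synonym 'n foba_state = "'n set \<times> (real^'n) \<times> real list"

definition gdt_stop :: "(real^'n \<Rightarrow> real^'n) \<Rightarrow> real \<Rightarrow> real^'n \<Rightarrow> bool" where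
  "gdt_stop g \<epsilon> b \<longleftrightarrow> infnorm (g b) < \<epsilon>"

definition gdt_fwd :: "(real^'n \<Rightarrow> real) \<Rightarrow> (real^'n \<Rightarrow> real^'n) \<Rightarrow> real
    \<Rightarrow> 'n foba_state \<Rightarrow> 'n foba_state \<Rightarrow> bool" where
  "gdt_fwd Q g \<epsilon> S S' \<longleftrightarrow> (\<exists>F b ds i b'. S = (F, b, ds) \<and> \<not> gdt_stop g \<epsilon> b \<and>
      i \<notin> F \<and> (\<forall>j. j \<notin> F \<longrightarrow> \<bar>g b $ j\<bar> \<le> \<bar>g b $ i\<bar>) \<and>
      restr_min Q (insert i F) b' \<and>
      S' = (insert i F, b', ds @ [Q b - Q b']))"

definition drop_val :: "(real^'n \<Rightarrow> real) \<Rightarrow> real^'n \<Rightarrow> 'n \<Rightarrow> real" where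
  "drop_val Q b i = Q (b - b $ i *\<^sub>R axis i 1)"

definition bwd_exit :: "(real^'n \<Rightarrow> real) \<Rightarrow> 'n foba_state \<Rightarrow> bool" where
  "bwd_exit Q S \<longleftrightarrow> (case S of (F, b, ds) \<Rightarrow>
      F = {} \<or> Min (drop_val Q b ` F) - Q b \<ge> last ds / 2)"

definition bwd_step :: "(real^'n \<Rightarrow> real) \<Rightarrow> 'n foba_state \<Rightarrow> 'n foba_state \<Rightarrow> bool" where
  "bwd_step Q S S' \<longleftrightarrow> (\<exists>F b ds j b'. S = (F, b, ds) \<and> \<not> bwd_exit Q S \<and>
      j \<in> F \<and> (\<forall>i\<in>F. drop_val Q b j \<le> drop_val Q b i) \<and>
      restr_min Q (F - {j}) b' \<and> S' = (F - {j}, b', butlast ds))"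

definition gdt_iter :: "(real^'n \<Rightarrow> real) \<Rightarrow> (real^'n \<Rightarrow> real^'n) \<Rightarrow> real
    \<Rightarrow> 'n foba_state \<Rightarrow> 'n foba_state \<Rightarrow> bool" where
  "gdt_iter Q g \<epsilon> S S' \<longleftrightarrow> (\<exists>S1. gdt_fwd Q g \<epsilon> S S1 \<and> (bwd_step Q)\<^sup>*\<^sup>* S1 S' \<and> bwd_exit Q S')"

definition foba_gdt_output :: "(real^'n \<Rightarrow> real) \<Rightarrow> (real^'n \<Rightarrow> real^'n) \<Rightarrow> real
    \<Rightarrow> 'n set \<Rightarrow> real^'n \<Rightarrow> bool" where
  "foba_gdt_output Q g \<epsilon> F b \<longleftrightarrow>
     (\<exists>ds. (gdt_iter Q g \<epsilon>)\<^sup>*\<^sup>* ({}, 0, []) (F, b, ds) \<and> gdt_stop g \<epsilon> b)"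

end

theory Submission
  imports Defs
begin


lemma supp_diff: "supp (x - y) \<subseteq> supp x \<union> supp y" by (auto simp: supp_def)
lemma supp_axis: "supp (c *\<^sub>R axis j (1::real) :: real^'n) \<subseteq> {j}" by (auto simp: supp_def axis_def)
lemma card_supp_le: "supp (v::real^'n) \<subseteq> S \<Longrightarrow> card S \<le> m \<Longrightarrow> card (supp v) \<le> m"
  by (meson card_mono finite le_trans)

lemma inner_sum: "(x::real^'n) \<bullet> y = (\<Sum>j\<in>UNIV. x$j * y$j)"
  by (simp add: inner_vec_def)
lemma norm_sq_sum: "(norm (x::real^'n))\<^sup>2 = (\<Sum>j\<in>UNIV. (x$j)\<^sup>2)"
  by (simp only: power2_norm_eq_inner inner_vec_def) (simp add: power2_eq_square)

lemma sum_restrict: "(\<And>j. j \<notin> A \<Longrightarrow> f j = 0) \<Longrightarrow> (\<Sum>j\<in>(UNIV::'n::finite set). f j) = (\<Sum>j\<in>A. f j)"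
  by (rule sum.mono_neutral_right) auto

lemma infnorm_le_cart: "(\<And>j. \<bar>(x::real^'n)$j\<bar> \<le> M) \<Longrightarrow> infnorm x \<le> M"
  unfolding infnorm_cart by (rule cSup_least) auto

locale foba =
  fixes Q :: "real^'n \<Rightarrow> real" and g :: "real^'n \<Rightarrow> real^'n" and s :: nat
    and lo hi lo1 h1 \<epsilon> :: real and bb :: "real^'n" and kbar :: nat
  assumes grad: "\<And>x. (Q has_derivative (\<lambda>h. g x \<bullet> h)) (at x)"
    and rs: "rsc Q g s lo hi" and r1: "rsc Q g 1 lo1 h1"
    and kb: "kbar = card (supp bb)" and bopt: "\<And>b. card (supp b) \<le> kbar \<Longrightarrow> Q bb \<le> Q b"
    and spos: "s > 0"
    and scond: "real s - real kbar > (real kbar + 1) * ((sqrt (hi / lo) + 1) * (2 * h1 / lo))\<^sup>2"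
    and epsc: "\<epsilon> > 2 * sqrt 2 * h1 / lo * infnorm (g bb)"
begin

lemma pos: "lo > 0" "hi > 0" "h1 > 0" using rs r1 by (auto simp: rsc_def)

lemma rs_lo: "card (supp (b' - b)) \<le> s \<Longrightarrow> lo/2 * (norm (b'-b))\<^sup>2 \<le> Q b' - Q b - g b \<bullet> (b' - b)"
  using rs by (auto simp: rsc_def)
lemma rs_hi: "card (supp (b' - b)) \<le> s \<Longrightarrow> Q b' - Q b - g b \<bullet> (b' - b) \<le> hi/2 * (norm (b'-b))\<^sup>2"
  using rs by (auto simp: rsc_def)
lemma r1_hi: "card (supp (b' - b)) \<le> 1 \<Longrightarrow> Q b' - Q b - g b \<bullet> (b' - b) \<le> h1/2 * (norm (b'-b))\<^sup>2"
  using r1 by (auto simp: rsc_def)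

lemma eps_pos: "\<epsilon> > 0"
proof -
  have "0 \<le> 2 * sqrt 2 * h1 / lo * infnorm (g bb)" using pos by (simp add: infnorm_pos_le)
  thus ?thesis using epsc by linarith
qed

lemma grad_zero:
  assumes rm: "restr_min Q F b" and j: "j \<in> F"
  shows "g b $ j = 0"
proof -
  have d: "((\<lambda>t. b + t *\<^sub>R axis j 1) has_derivative (\<lambda>t. t *\<^sub>R axis j 1)) (at 0)"
    by (auto intro!: derivative_eq_intros)
  have "((\<lambda>t. Q (b + t *\<^sub>R axis j 1)) has_derivative (\<lambda>t. g (b + 0 *\<^sub>R axis j 1) \<bullet> (t *\<^sub>R axis j 1))) (at 0)"
    by (rule has_derivative_compose[OF d grad])
  moreover have "(\<lambda>t. g (b + 0 *\<^sub>R axis j 1) \<bullet> (t *\<^sub>R axis j 1)) = (*) (g b $ j)"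
    by (auto simp: inner_axis)
  ultimately have D: "DERIV (\<lambda>t. Q (b + t *\<^sub>R axis j 1)) 0 :> g b $ j"
    by (simp add: has_field_derivative_def)
  have "\<forall>y. \<bar>0 - y\<bar> < 1 \<longrightarrow> Q (b + 0 *\<^sub>R axis j 1) \<le> Q (b + y *\<^sub>R axis j 1)"
  proof (intro allI impI)
    fix y :: real
    have "supp (b + y *\<^sub>R axis j 1) \<subseteq> F" using rm j by (auto simp: supp_def restr_min_def axis_def)
    thus "Q (b + 0 *\<^sub>R axis j 1) \<le> Q (b + y *\<^sub>R axis j 1)" using rm by (auto simp: restr_min_def)
  qed
  from DERIV_local_min[OF D _ this] show ?thesis by simp
qed

lemma fwd_gain:
  assumes sb: "supp b \<subseteq> F" and rm: "restr_min Q (insert i F) b'"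
  shows "(g b $ i)\<^sup>2 / (2*h1) \<le> Q b - Q b'"
proof -
  define \<alpha> where "\<alpha> = - (g b $ i) / h1"
  define y where "y = b + \<alpha> *\<^sub>R axis i 1"
  have "supp y \<subseteq> insert i F" using sb by (auto simp: supp_def y_def axis_def)
  hence 1: "Q b' \<le> Q y" using rm by (auto simp: restr_min_def)
  have "card (supp (y - b)) \<le> 1"
    by (rule card_supp_le[of _ "{i}"]) (auto simp: y_def supp_def axis_def)
  from r1_hi[OF this] have "Q y - Q b - g b \<bullet> (y - b) \<le> h1/2 * (norm (y - b))\<^sup>2" .
  moreover have "g b \<bullet> (y - b) = \<alpha> * g b $ i" by (simp add: y_def inner_axis)
  moreover have "norm (y - b) = \<bar>\<alpha>\<bar>" by (simp add: y_def)
  ultimately have "Q y \<le> Q b + \<alpha> * g b $ i + h1/2 * \<alpha>\<^sup>2" by (simp add: power2_abs)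
  also have "\<dots> = Q b - (g b $ i)\<^sup>2 / (2*h1)" using pos
    by (simp add: \<alpha>_def field_simps power2_eq_square)
  finally show ?thesis using 1 by linarith
qed

lemma drop_le:
  assumes rm: "restr_min Q F b" and j: "j \<in> F"
  shows "drop_val Q b j - Q b \<le> h1/2 * (b$j)\<^sup>2"
proof -
  define y where "y = b - b$j *\<^sub>R axis j 1"
  have "card (supp (y - b)) \<le> 1"
    by (rule card_supp_le[of _ "{j}"]) (auto simp: y_def supp_def axis_def)
  from r1_hi[OF this] have A: "Q y - Q b - g b \<bullet> (y - b) \<le> h1/2 * (norm (y - b))\<^sup>2" .
  have B: "g b \<bullet> (y - b) = 0" using grad_zero[OF rm j] by (simp add: y_def inner_axis)
  have C: "(norm (y - b))\<^sup>2 = (b$j)\<^sup>2" by (simp add: y_def power2_abs)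
  have D: "drop_val Q b j = Q y" by (simp add: drop_val_def y_def)
  show ?thesis using A unfolding B C D by simp
qed

lemma bb_rm: "restr_min Q (supp bb) bb"
  unfolding restr_min_def
proof (intro conjI allI impI)
  fix b' assume "supp b' \<subseteq> supp bb"
  then have "card (supp b') \<le> kbar" using kb by (simp add: card_mono)
  then show "Q bb \<le> Q b'" by (rule bopt)
qed simp

lemma static:
  assumes rm: "restr_min Q F b" and cs: "card F + kbar \<le> s"
    and big: "\<And>j. j \<in> F - supp bb \<Longrightarrow> 2 * infnorm (g bb) / lo \<le> \<bar>b$j\<bar>"
    and G: "\<And>j. j \<in> supp bb - F \<Longrightarrow> \<bar>g b $ j\<bar> \<le> G"
  shows "lo * (norm (b - bb))\<^sup>2 \<le> (\<Sum>j\<in>supp bb - F. G * \<bar>b$j - bb$j\<bar>) + lo/2 * (\<Sum>j\<in>F - supp bb. (b$j - bb$j)\<^sup>2)"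
    and "Q b - Q bb \<le> (\<Sum>j\<in>supp bb - F. G * \<bar>b$j - bb$j\<bar>) - lo/2 * (norm (b - bb))\<^sup>2"
proof -
  let ?Fb = "supp bb" let ?N = "supp bb - F" let ?P = "F - supp bb"
  have sbF: "supp b \<subseteq> F" using rm by (simp add: restr_min_def)
  have cU: "card (F \<union> ?Fb) \<le> s" using card_Un_le[of F ?Fb] cs kb by linarith
  have c1: "card (supp (bb - b)) \<le> s"
    by (rule card_supp_le[OF _ cU]) (use supp_diff[of bb b] sbF in auto)
  have c2: "card (supp (b - bb)) \<le> s"
    by (rule card_supp_le[OF _ cU]) (use supp_diff[of b bb] sbF in auto)
  have L1: "lo/2 * (norm (b - bb))\<^sup>2 \<le> Q bb - Q b - g b \<bullet> (bb - b)"
    using rs_lo[OF c1] by (simp add: norm_minus_commute)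
  have L2: "lo/2 * (norm (b - bb))\<^sup>2 \<le> Q b - Q bb - g bb \<bullet> (b - bb)"
    using rs_lo[OF c2] .
  have gz: "\<And>j. j \<in> F \<Longrightarrow> g b $ j = 0" using grad_zero[OF rm] .
  have gbz: "\<And>j. j \<in> ?Fb \<Longrightarrow> g bb $ j = 0" using grad_zero[OF bb_rm] .
  have bz: "\<And>j. j \<notin> F \<Longrightarrow> b $ j = 0" using sbF by (auto simp: supp_def)
  have bbz: "\<And>j. j \<notin> ?Fb \<Longrightarrow> bb $ j = 0" by (auto simp: supp_def)
  have "g b \<bullet> (bb - b) = (\<Sum>j\<in>?N. g b $ j * (bb - b) $ j)"
    unfolding inner_sum
  proof (rule sum_restrict)
    fix j assume "j \<notin> ?N" thus "g b $ j * (bb - b) $ j = 0" by (cases "j \<in> F") (auto simp: gz bz bbz)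
  qed
  hence "- (g b \<bullet> (bb - b)) = (\<Sum>j\<in>?N. - (g b $ j * (bb $ j - b $ j)))" by (simp add: sum_negf)
  also have "\<dots> \<le> (\<Sum>j\<in>?N. G * \<bar>b$j - bb$j\<bar>)"
  proof (rule sum_mono)
    fix j assume j: "j \<in> ?N"
    have "- (g b $ j * (bb $ j - b $ j)) \<le> \<bar>g b $ j\<bar> * \<bar>b$j - bb$j\<bar>"
      by (metis abs_ge_minus_self abs_minus_commute abs_mult)
    also have "\<dots> \<le> G * \<bar>b$j - bb$j\<bar>" using G[OF j] by (simp add: mult_right_mono)
    finally show "- (g b $ j * (bb $ j - b $ j)) \<le> G * \<bar>b$j - bb$j\<bar>" .
  qed
  finally have T1: "- (g b \<bullet> (bb - b)) \<le> (\<Sum>j\<in>?N. G * \<bar>b$j - bb$j\<bar>)" .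
  have "g bb \<bullet> (b - bb) = (\<Sum>j\<in>?P. g bb $ j * (b - bb) $ j)"
    unfolding inner_sum
  proof (rule sum_restrict)
    fix j assume "j \<notin> ?P" thus "g bb $ j * (b - bb) $ j = 0" by (cases "j \<in> ?Fb") (auto simp: gbz bz bbz)
  qed
  hence "- (g bb \<bullet> (b - bb)) = (\<Sum>j\<in>?P. - (g bb $ j * (b $ j - bb $ j)))" by (simp add: sum_negf)
  also have "\<dots> \<le> (\<Sum>j\<in>?P. lo/2 * (b$j - bb$j)\<^sup>2)"
  proof (rule sum_mono)
    fix j assume j: "j \<in> ?P"
    have bbj: "bb $ j = 0" using j bbz by auto
    have "- (g bb $ j * (b $ j - bb $ j)) \<le> \<bar>g bb $ j\<bar> * \<bar>b$j\<bar>"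
      using bbj by (simp add: abs_mult[symmetric])
    also have "\<dots> \<le> infnorm (g bb) * \<bar>b$j\<bar>"
      by (rule mult_right_mono) (auto simp: component_le_infnorm_cart)
    also have "\<dots> \<le> lo/2 * \<bar>b$j\<bar> * \<bar>b$j\<bar>"
    proof -
      have "infnorm (g bb) \<le> lo/2 * \<bar>b$j\<bar>" using big[OF j] pos by (simp add: field_simps)
      thus ?thesis by (rule mult_right_mono) simp
    qed
    also have "\<dots> = lo/2 * (b$j - bb$j)\<^sup>2" using bbj by (simp add: power2_eq_square)
    finally show "- (g bb $ j * (b $ j - bb $ j)) \<le> lo/2 * (b$j - bb$j)\<^sup>2" .
  qed
  finally have T2: "- (g bb \<bullet> (b - bb)) \<le> lo/2 * (\<Sum>j\<in>?P. (b$j - bb$j)\<^sup>2)"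
    by (simp add: sum_distrib_left)
  show "lo * (norm (b - bb))\<^sup>2 \<le> (\<Sum>j\<in>?N. G * \<bar>b$j - bb$j\<bar>) + lo/2 * (\<Sum>j\<in>?P. (b$j - bb$j)\<^sup>2)"
    using L1 L2 T1 T2 by linarith
  show "Q b - Q bb \<le> (\<Sum>j\<in>?N. G * \<bar>b$j - bb$j\<bar>) - lo/2 * (norm (b - bb))\<^sup>2"
    using L1 T1 by linarith
qed

lemma lo_le_h1: "lo \<le> h1"
proof -
  define v :: "real^'n" where "v = axis undefined 1"
  have c: "card (supp (v - 0)) \<le> 1" by (rule card_supp_le[of _ "{undefined}"]) (auto simp: v_def supp_def axis_def)
  have "card (supp (v - 0)) \<le> s" using c spos by linarith
  from rs_lo[OF this] r1_hi[OF c] have "lo/2 * (norm v)\<^sup>2 \<le> h1/2 * (norm v)\<^sup>2" by simp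
  thus ?thesis by (simp add: v_def)
qed

lemma sq_bound: "(l::real) > 0 \<Longrightarrow> G * x - l * x\<^sup>2 \<le> G\<^sup>2 / (4*l)"
proof -
  assume l: "l > 0"
  have "0 \<le> (G - 2*l*x)\<^sup>2" by simp
  hence "4*l*(G*x - l*x\<^sup>2) \<le> G\<^sup>2" by (simp add: power2_eq_square algebra_simps)
  thus ?thesis using l by (simp add: field_simps)
qed

lemma norm_split:
  assumes "A \<inter> B = {}"
  shows "(\<Sum>j\<in>A. ((x::real^'n)$j)\<^sup>2) + (\<Sum>j\<in>B. (x$j)\<^sup>2) \<le> (norm x)\<^sup>2"
proof -
  have "(\<Sum>j\<in>A. (x$j)\<^sup>2) + (\<Sum>j\<in>B. (x$j)\<^sup>2) = (\<Sum>j\<in>A \<union> B. (x$j)\<^sup>2)"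
    using assms by (simp add: sum.union_disjoint)
  also have "\<dots> \<le> (\<Sum>j\<in>UNIV. (x$j)\<^sup>2)" by (rule sum_mono2) auto
  finally show ?thesis by (simp add: norm_sq_sum)
qed

lemma eps_sq: "(2 * infnorm (g bb) / lo)\<^sup>2 \<le> \<epsilon>\<^sup>2 / (2 * h1\<^sup>2)"
proof -
  have e0: "0 \<le> 2 * sqrt 2 * h1 / lo * infnorm (g bb)" using pos by (simp add: infnorm_pos_le)
  have "(2 * sqrt 2 * h1 / lo * infnorm (g bb))\<^sup>2 \<le> \<epsilon>\<^sup>2"
    using epsc e0 by (intro power_mono) auto
  hence "8 * h1\<^sup>2 * (infnorm (g bb) / lo)\<^sup>2 \<le> \<epsilon>\<^sup>2"
    by (simp add: power_mult_distrib power_divide)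
  thus ?thesis using pos by (simp add: field_simps power_mult_distrib power_divide)
qed

lemma big_of_sq:
  assumes "\<epsilon>\<^sup>2 / (2 * h1\<^sup>2) \<le> (x::real)\<^sup>2"
  shows "2 * infnorm (g bb) / lo \<le> \<bar>x\<bar>"
proof (rule power2_le_imp_le)
  show "(2 * infnorm (g bb) / lo)\<^sup>2 \<le> \<bar>x\<bar>\<^sup>2" using eps_sq assms by simp
qed simp

end

context foba begin

lemma main_step:
  assumes rm0: "restr_min Q F0 b0" and i: "i \<notin> F0"
    and arg: "\<And>j. j \<notin> F0 \<Longrightarrow> \<bar>g b0 $ j\<bar> \<le> \<bar>g b0 $ i\<bar>"
    and ns: "\<epsilon> \<le> infnorm (g b0)"
    and c0: "card F0 + 1 + kbar \<le> s"
    and rm1: "restr_min Q (insert i F0) b1"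
    and drops: "\<And>j. j \<in> insert i F0 \<Longrightarrow> (Q b0 - Q b1)/2 \<le> drop_val Q b1 j - Q b1"
  shows "card (insert i F0) + 1 + kbar \<le> s"
proof -
  define F1 where "F1 = insert i F0"
  define M where "M = \<bar>g b0 $ i\<bar>"
  define \<delta> where "\<delta> = Q b0 - Q b1"
  define \<kappa> where "\<kappa> = sqrt (hi/lo)"
  have lo: "lo > 0" and hi: "hi > 0" and h1: "h1 > 0" using pos by auto
  have sb0: "supp b0 \<subseteq> F0" using rm0 by (simp add: restr_min_def)
  have sb1: "supp b1 \<subseteq> F1" using rm1 by (simp add: restr_min_def F1_def)
  have g0z: "\<And>j. j \<in> F0 \<Longrightarrow> g b0 $ j = 0" using grad_zero[OF rm0] .
  have g1z: "\<And>j. j \<in> F1 \<Longrightarrow> g b1 $ j = 0" using grad_zero[OF rm1] unfolding F1_def .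
  have b0z: "\<And>j. j \<notin> F0 \<Longrightarrow> b0 $ j = 0" using sb0 by (auto simp: supp_def)
  have b1z: "\<And>j. j \<notin> F1 \<Longrightarrow> b1 $ j = 0" using sb1 by (auto simp: supp_def)
  have Mall: "\<And>j. \<bar>g b0 $ j\<bar> \<le> M"
    unfolding M_def by (case_tac "j \<in> F0") (auto simp: g0z arg)
  have Meps: "\<epsilon> \<le> M" using ns infnorm_le_cart[OF Mall] by linarith
  have Mpos: "M > 0" using Meps eps_pos by linarith
  have cF1: "card F1 = card F0 + 1" using i by (simp add: F1_def)
  have cF1s: "card F1 \<le> s" using c0 cF1 by linarith
  have dlow: "M\<^sup>2 / (2*h1) \<le> \<delta>"
    using fwd_gain[OF sb0 rm1] by (simp add: M_def \<delta>_def power2_abs)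
  have dup: "\<delta> \<le> M\<^sup>2 / (2*lo)"
  proof -
    have c: "card (supp (b1 - b0)) \<le> s"
      by (rule card_supp_le[OF _ cF1s]) (use supp_diff[of b1 b0] sb0 sb1 in \<open>auto simp: F1_def\<close>)
    have L: "lo/2 * (norm (b1 - b0))\<^sup>2 \<le> Q b1 - Q b0 - g b0 \<bullet> (b1 - b0)" by (rule rs_lo[OF c])
    define t where "t = (b1 - b0) $ i"
    have ip: "g b0 \<bullet> (b1 - b0) = (\<Sum>j\<in>{i}. g b0 $ j * (b1 - b0) $ j)"
      unfolding inner_sum
    proof (rule sum_restrict)
      fix j assume "j \<notin> {i}" thus "g b0 $ j * (b1 - b0) $ j = 0"
        by (cases "j \<in> F0") (auto simp: g0z b0z b1z F1_def)
    qed
    hence ip': "g b0 \<bullet> (b1 - b0) = g b0 $ i * t" by (simp add: t_def)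
    have "t\<^sup>2 \<le> (norm (b1 - b0))\<^sup>2" unfolding t_def
      using power_mono[OF component_le_norm_cart[of "b1 - b0" i] abs_ge_zero, of 2] by (simp add: power2_abs)
    hence "lo/2 * t\<^sup>2 \<le> lo/2 * (norm (b1 - b0))\<^sup>2" using lo by simp
    hence A: "\<delta> \<le> - g b0 $ i * t - lo/2 * t\<^sup>2" using L ip' unfolding \<delta>_def by linarith
    have "- g b0 $ i * t \<le> M * \<bar>t\<bar>" unfolding M_def using abs_ge_minus_self[of "g b0 $ i * t"] by (simp add: abs_mult)
    hence "\<delta> \<le> M * \<bar>t\<bar> - (2*lo) * \<bar>t\<bar>\<^sup>2 / 4" using A by (simp add: power2_abs)
    also have "\<dots> \<le> M\<^sup>2 / (4*(2*lo/4))" using sq_bound[of "2*lo/4" M "\<bar>t\<bar>"] lo by simp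
    finally show ?thesis by simp
  qed
  \<comment> \<open>co-coercivity bound on the gradient at b1\<close>
  have coco: "\<bar>g b1 $ j\<bar> \<le> (1 + \<kappa>) * M" if j: "j \<in> supp bb - F1" for j
  proof -
    define D where "D = g b0 $ j - g b1 $ j"
    define t where "t = D / hi"
    define y where "y = b0 - t *\<^sub>R axis j 1"
    have "card (supp bb) > 0" using j by (auto simp: card_gt_0_iff)
    hence kb1: "kbar \<ge> 1" using kb by linarith
    have cU: "card (insert j F1) \<le> s" using cF1 c0 kb1 by (simp add: card_insert_if)
    have "supp (y - b1) \<subseteq> insert j F1"
    proof
      fix x assume x: "x \<in> supp (y - b1)"
      show "x \<in> insert j F1"
      proof (rule ccontr)
        assume "x \<notin> insert j F1"
        then have "x \<notin> F0" "x \<noteq> j" "x \<notin> F1" by (auto simp: F1_def)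
        then show False using x b0z[of x] b1z[of x] by (auto simp: supp_def y_def axis_def)
      qed
    qed
    have c1: "card (supp (y - b1)) \<le> s" by (rule card_supp_le[OF \<open>supp (y - b1) \<subseteq> insert j F1\<close> cU])
    have c2: "card (supp (y - b0)) \<le> s"
      by (rule card_supp_le[of _ "{j}"]) (use spos in \<open>auto simp: y_def supp_def axis_def\<close>)
    have L1: "lo/2 * (norm (y - b1))\<^sup>2 \<le> Q y - Q b1 - g b1 \<bullet> (y - b1)" by (rule rs_lo[OF c1])
    have L2: "Q y - Q b0 - g b0 \<bullet> (y - b0) \<le> hi/2 * (norm (y - b0))\<^sup>2" by (rule rs_hi[OF c2])
    have z: "g b1 \<bullet> (b0 - b1) = 0"
    proof -
      have "g b1 \<bullet> (b0 - b1) = (\<Sum>j\<in>{}. g b1 $ j * (b0 - b1) $ j)"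
        unfolding inner_sum
      proof (rule sum_restrict)
        fix k :: 'n assume "k \<notin> {}" thus "g b1 $ k * (b0 - b1) $ k = 0"
          by (cases "k \<in> F1") (auto simp: g1z b0z b1z F1_def)
      qed
      thus ?thesis by simp
    qed
    have e1: "g b1 \<bullet> (y - b1) = - t * g b1 $ j"
    proof -
      have "y - b1 = (b0 - b1) - t *\<^sub>R axis j 1" by (simp add: y_def)
      hence "g b1 \<bullet> (y - b1) = g b1 \<bullet> (b0 - b1) - t * g b1 $ j" by (simp add: inner_diff_right inner_axis)
      thus ?thesis using z by simp
    qed
    have e2: "g b0 \<bullet> (y - b0) = - t * g b0 $ j" by (simp add: y_def inner_axis)
    have e3: "(norm (y - b0))\<^sup>2 = t\<^sup>2" by (simp add: y_def power2_abs)
    have "0 \<le> lo/2 * (norm (y - b1))\<^sup>2" using lo by simp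
    hence "t * D - hi/2 * t\<^sup>2 \<le> \<delta>" using L1 L2 e1 e2 e3 unfolding \<delta>_def D_def
      by (simp add: algebra_simps)
    moreover have "t * D - hi/2 * t\<^sup>2 = D\<^sup>2 / (2*hi)" using hi
      by (simp add: t_def field_simps power2_eq_square)
    ultimately have "D\<^sup>2 / (2*hi) \<le> M\<^sup>2 / (2*lo)" using dup by linarith
    hence "D\<^sup>2 \<le> hi * M\<^sup>2 / lo" using lo hi by (simp add: field_simps)
    hence "sqrt (D\<^sup>2) \<le> sqrt (hi * M\<^sup>2 / lo)" by (rule real_sqrt_le_mono)
    also have "sqrt (hi * M\<^sup>2 / lo) = \<kappa> * M" using Mpos
      by (simp add: \<kappa>_def real_sqrt_mult real_sqrt_divide)
    finally have "\<bar>D\<bar> \<le> \<kappa> * M" by simp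
    moreover have "\<bar>g b0 $ j\<bar> \<le> M" by (rule Mall)
    moreover have "\<bar>g b1 $ j\<bar> \<le> \<bar>g b0 $ j\<bar> + \<bar>D\<bar>"
      unfolding D_def using abs_triangle_ineq4[of "g b0 $ j" "g b0 $ j - g b1 $ j"] by simp
    ultimately show ?thesis by (simp add: distrib_right)
  qed
  have bigj: "\<delta>/h1 \<le> (b1$j)\<^sup>2" if j: "j \<in> F1" for j
  proof -
    have "\<delta>/2 \<le> h1/2 * (b1$j)\<^sup>2" using drops[of j] drop_le[OF rm1, of j] j
      unfolding F1_def \<delta>_def by linarith
    thus ?thesis using h1 by (simp add: field_simps)
  qed
  have Mh: "\<epsilon>\<^sup>2 / (2 * h1\<^sup>2) \<le> \<delta>/h1"
  proof -
    have "\<epsilon>\<^sup>2 \<le> M\<^sup>2" using Meps eps_pos by (intro power_mono) auto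
    hence "\<epsilon>\<^sup>2 / (2 * h1\<^sup>2) \<le> M\<^sup>2 / (2 * h1\<^sup>2)" using h1 by (simp add: divide_right_mono)
    also have "\<dots> = M\<^sup>2 / (2*h1) / h1" by (simp add: power2_eq_square)
    finally have "\<epsilon>\<^sup>2 / (2 * h1\<^sup>2) \<le> M\<^sup>2 / (2*h1) / h1" .
    also have "\<dots> \<le> \<delta>/h1" by (rule divide_right_mono[OF dlow]) (use h1 in simp)
    finally show ?thesis .
  qed
  let ?N = "supp bb - F1" let ?P = "F1 - supp bb"
  define G where "G = (1 + \<kappa>) * M"
  have st: "lo * (norm (b1 - bb))\<^sup>2 \<le> (\<Sum>j\<in>?N. G * \<bar>b1$j - bb$j\<bar>) + lo/2 * (\<Sum>j\<in>?P. (b1$j - bb$j)\<^sup>2)"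
  proof (rule static(1))
    show "restr_min Q F1 b1" using rm1 by (simp add: F1_def)
    show "card F1 + kbar \<le> s" using c0 cF1 by linarith
    show "2 * infnorm (g bb) / lo \<le> \<bar>b1$j\<bar>" if "j \<in> F1 - supp bb" for j
      using big_of_sq Mh bigj that by (meson DiffD1 order_trans)
    show "\<bar>g b1 $ j\<bar> \<le> G" if "j \<in> supp bb - F1" for j using coco[OF that] by (simp add: G_def)
  qed
  have ns2: "(\<Sum>j\<in>?N. (b1$j - bb$j)\<^sup>2) + (\<Sum>j\<in>?P. (b1$j - bb$j)\<^sup>2) \<le> (norm (b1 - bb))\<^sup>2"
    using norm_split[of ?N ?P "b1 - bb"] by auto
  have "lo/2 * (\<Sum>j\<in>?P. (b1$j - bb$j)\<^sup>2) \<le> (\<Sum>j\<in>?N. G * \<bar>b1$j - bb$j\<bar> - lo * (b1$j - bb$j)\<^sup>2)"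
  proof -
    have ns3: "lo * ((\<Sum>j\<in>?N. (b1$j - bb$j)\<^sup>2) + (\<Sum>j\<in>?P. (b1$j - bb$j)\<^sup>2)) \<le> lo * (norm (b1 - bb))\<^sup>2"
      using ns2 lo by (intro mult_left_mono) auto
    have eq: "(\<Sum>j\<in>?N. G * \<bar>b1$j - bb$j\<bar> - lo * (b1$j - bb$j)\<^sup>2) = (\<Sum>j\<in>?N. G * \<bar>b1$j - bb$j\<bar>) - lo * (\<Sum>j\<in>?N. (b1$j - bb$j)\<^sup>2)"
      by (simp add: sum_subtractf sum_distrib_left)
    show ?thesis unfolding eq using st ns3 by (simp add: distrib_left)
  qed
  also have "\<dots> \<le> (\<Sum>j\<in>?N. G\<^sup>2 / (4*lo))"
    by (rule sum_mono) (use sq_bound[OF lo] in \<open>metis power2_abs\<close>)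
  also have "\<dots> = card ?N * (G\<^sup>2 / (4*lo))" by simp
  also have "\<dots> \<le> kbar * (G\<^sup>2 / (4*lo))"
  proof -
    have "card ?N \<le> kbar" using kb by (simp add: card_mono)
    thus ?thesis using lo by (intro mult_right_mono) auto
  qed
  finally have A: "lo/2 * (\<Sum>j\<in>?P. (b1$j - bb$j)\<^sup>2) \<le> kbar * (G\<^sup>2 / (4*lo))" .
  have "card ?P * (\<delta>/h1) = (\<Sum>j\<in>?P. \<delta>/h1)" by simp
  also have "\<dots> \<le> (\<Sum>j\<in>?P. (b1$j - bb$j)\<^sup>2)"
    by (rule sum_mono) (use bigj in \<open>auto simp: supp_def\<close>)
  finally have B: "card ?P * (\<delta>/h1) \<le> (\<Sum>j\<in>?P. (b1$j - bb$j)\<^sup>2)" .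
  have B0: "card ?P * (M\<^sup>2 / (2*h1\<^sup>2)) \<le> card ?P * (\<delta>/h1)"
    using dlow h1 by (intro mult_left_mono) (auto simp: field_simps power2_eq_square)
  have "lo/2 * (card ?P * (M\<^sup>2 / (2*h1\<^sup>2))) \<le> lo/2 * (card ?P * (\<delta>/h1))"
    by (rule mult_left_mono[OF B0]) (use lo in simp)
  also have "\<dots> \<le> lo/2 * (\<Sum>j\<in>?P. (b1$j - bb$j)\<^sup>2)" by (rule mult_left_mono[OF B]) (use lo in simp)
  finally have C: "lo/2 * (card ?P * (M\<^sup>2 / (2*h1\<^sup>2))) \<le> kbar * (G\<^sup>2 / (4*lo))" using A by linarith
  define X where "X = (1 + \<kappa>)\<^sup>2 * h1\<^sup>2 / lo\<^sup>2"
  have cP: "card ?P \<le> kbar * X"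
  proof -
    have "card ?P * lo\<^sup>2 * M\<^sup>2 \<le> kbar * (1 + \<kappa>)\<^sup>2 * h1\<^sup>2 * M\<^sup>2"
    proof -
      have e: "lo/2 * (card ?P * (M\<^sup>2 / (2*h1\<^sup>2))) = (card ?P * lo\<^sup>2 * M\<^sup>2) / (4 * h1\<^sup>2 * lo)"
        using lo h1 by (simp add: field_simps power2_eq_square)
      have f: "kbar * (G\<^sup>2 / (4*lo)) = (kbar * (1 + \<kappa>)\<^sup>2 * h1\<^sup>2 * M\<^sup>2) / (4 * h1\<^sup>2 * lo)"
        using lo h1 by (simp add: G_def field_simps power2_eq_square)
      have D: "0 < 4 * h1\<^sup>2 * lo" using lo h1 by simp
      have C': "(card ?P * lo\<^sup>2 * M\<^sup>2) / (4 * h1\<^sup>2 * lo) \<le> (kbar * (1 + \<kappa>)\<^sup>2 * h1\<^sup>2 * M\<^sup>2) / (4 * h1\<^sup>2 * lo)"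
        using C unfolding e f .
      show ?thesis using divide_le_cancel[THEN iffD1, OF C'] D by blast
    qed
    hence "card ?P * lo\<^sup>2 \<le> kbar * (1 + \<kappa>)\<^sup>2 * h1\<^sup>2" using Mpos by simp
    thus ?thesis using lo by (simp add: X_def field_simps)
  qed
  have X1: "1 \<le> X"
  proof -
    have "1 \<le> (1 + \<kappa>)\<^sup>2" by (rule one_le_power) (use lo hi in \<open>simp add: \<kappa>_def\<close>)
    moreover have "1 \<le> h1\<^sup>2 / lo\<^sup>2" using lo_le_h1 lo by (simp add: power_mono)
    ultimately have "1 * 1 \<le> (1 + \<kappa>)\<^sup>2 * (h1\<^sup>2 / lo\<^sup>2)"
      by (intro mult_mono) auto
    thus ?thesis unfolding X_def by simp
  qed
  have cF: "card F1 \<le> card ?P + kbar"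
  proof -
    have "F1 \<subseteq> ?P \<union> supp bb" by auto
    hence "card F1 \<le> card (?P \<union> supp bb)" by (simp add: card_mono)
    also have "\<dots> \<le> card ?P + card (supp bb)" by (rule card_Un_le)
    finally show ?thesis using kb by simp
  qed
  have sc: "real s - real kbar > (real kbar + 1) * (4 * X)"
  proof -
    have "((\<kappa> + 1) * (2 * h1 / lo))\<^sup>2 = 4 * X"
      by (simp add: X_def power_mult_distrib power_divide add.commute)
    thus ?thesis using scond unfolding \<kappa>_def by simp
  qed
  have "real (card F1) + 1 + kbar \<le> kbar * X + kbar + 1 + kbar" using cF cP by linarith
  also have "\<dots> < real s"
  proof -
    have "kbar * X \<ge> kbar" using mult_left_mono[OF X1, of "real kbar"] by simp
    thus ?thesis using sc X1 by (simp add: algebra_simps)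
  qed
  finally show ?thesis unfolding F1_def[symmetric] by linarith
qed

end

context foba begin

definition good :: "'n foba_state \<Rightarrow> bool" where
  "good S \<longleftrightarrow> (case S of (F, b, ds) \<Rightarrow> restr_min Q F b \<and> length ds = card F \<and>
      (\<forall>x\<in>set ds. \<epsilon>\<^sup>2 / (2*h1) \<le> x))"

definition Inv :: "'n foba_state \<Rightarrow> bool" where
  "Inv S \<longleftrightarrow> (case S of (F, b, ds) \<Rightarrow> good S \<and> card F + kbar \<le> s \<and>
      (\<not> gdt_stop g \<epsilon> b \<longrightarrow> card F + 1 + kbar \<le> s) \<and>
      (F \<noteq> {} \<longrightarrow> (\<forall>j\<in>F. last ds / 2 \<le> drop_val Q b j - Q b)))"

lemma bwd_star:
  assumes "(bwd_step Q)\<^sup>*\<^sup>* S1 S" and "good S1"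
  shows "good S \<and> (S = S1 \<or> card (fst S) + 1 \<le> card (fst S1))"
  using assms(1)
proof (induction rule: rtranclp_induct)
  case base
  then show ?case using assms(2) by simp
next
  case (step S S'')
  from step.hyps(2) obtain F b ds j b' where S: "S = (F, b, ds)" and j: "j \<in> F"
    and rm: "restr_min Q (F - {j}) b'" and S'': "S'' = (F - {j}, b', butlast ds)"
    unfolding bwd_step_def by blast
  have gS: "good S" using step.IH by simp
  have "card F > 0" using j by (auto simp: card_gt_0_iff)
  hence cF: "card (F - {j}) + 1 = card F" using j by (simp add: card_Diff_singleton)
  have "good S''" using gS rm cF unfolding S S'' good_def
    by (auto dest: in_set_butlastD)
  moreover have "card (fst S'') + 1 \<le> card (fst S1)"
    using step.IH cF unfolding S S'' by auto
  ultimately show ?case by simp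
qed

lemma infnorm_arg:
  assumes rm0: "restr_min Q F0 b0" and arg: "\<And>j. j \<notin> F0 \<Longrightarrow> \<bar>g b0 $ j\<bar> \<le> \<bar>g b0 $ i\<bar>"
  shows "infnorm (g b0) \<le> \<bar>g b0 $ i\<bar>"
proof (rule infnorm_le_cart)
  fix j show "\<bar>g b0 $ j\<bar> \<le> \<bar>g b0 $ i\<bar>"
    by (cases "j \<in> F0") (auto simp: grad_zero[OF rm0] arg)
qed

lemma exit_drops:
  assumes "bwd_exit Q (F, b, ds)" "F \<noteq> {}" "j \<in> F"
  shows "last ds / 2 \<le> drop_val Q b j - Q b"
proof -
  have "Min (drop_val Q b ` F) - Q b \<ge> last ds / 2" using assms(1,2) by (simp add: bwd_exit_def)
  moreover have "Min (drop_val Q b ` F) \<le> drop_val Q b j" using assms(3) by (simp add: Min_le)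
  ultimately show ?thesis by linarith
qed

lemma iter_inv:
  assumes I0: "Inv S0" and it: "gdt_iter Q g \<epsilon> S0 S"
  shows "Inv S"
proof -
  from it obtain S1 where fw: "gdt_fwd Q g \<epsilon> S0 S1" and st: "(bwd_step Q)\<^sup>*\<^sup>* S1 S"
    and ex: "bwd_exit Q S" unfolding gdt_iter_def by blast
  from fw obtain F0 b0 ds0 i b1 where S0: "S0 = (F0, b0, ds0)" and nst: "\<not> gdt_stop g \<epsilon> b0"
    and i: "i \<notin> F0" and arg: "\<And>j. j \<notin> F0 \<Longrightarrow> \<bar>g b0 $ j\<bar> \<le> \<bar>g b0 $ i\<bar>"
    and rm1: "restr_min Q (insert i F0) b1"
    and S1: "S1 = (insert i F0, b1, ds0 @ [Q b0 - Q b1])"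
    unfolding gdt_fwd_def by blast
  have rm0: "restr_min Q F0 b0" and len0: "length ds0 = card F0"
    and ds0: "\<forall>x\<in>set ds0. \<epsilon>\<^sup>2 / (2*h1) \<le> x"
    and c0: "card F0 + 1 + kbar \<le> s"
    using I0 nst unfolding Inv_def good_def S0 by auto
  have ns: "\<epsilon> \<le> infnorm (g b0)" using nst by (simp add: gdt_stop_def)
  have "\<epsilon> \<le> \<bar>g b0 $ i\<bar>" using ns infnorm_arg[OF rm0 arg] by linarith
  hence "\<epsilon>\<^sup>2 \<le> (g b0 $ i)\<^sup>2" using eps_pos by (metis abs_le_square_iff abs_of_pos)
  hence "\<epsilon>\<^sup>2 / (2*h1) \<le> (g b0 $ i)\<^sup>2 / (2*h1)" using pos by (simp add: divide_right_mono)
  also have "\<dots> \<le> Q b0 - Q b1" using fwd_gain[OF _ rm1] rm0 by (simp add: restr_min_def)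
  finally have dnew: "\<epsilon>\<^sup>2 / (2*h1) \<le> Q b0 - Q b1" .
  have cF1: "card (insert i F0) = card F0 + 1" using i by simp
  have g1: "good S1" unfolding S1 good_def using rm1 len0 ds0 dnew cF1 by auto
  from bwd_star[OF st g1] have gS: "good S" and alt: "S = S1 \<or> card (fst S) + 1 \<le> card (fst S1)" by auto
  obtain F b ds where S: "S = (F, b, ds)" by (cases S) auto
  have drops: "F \<noteq> {} \<longrightarrow> (\<forall>j\<in>F. last ds / 2 \<le> drop_val Q b j - Q b)"
    using exit_drops ex unfolding S by blast
  show ?thesis
  proof (cases "S = S1")
    case True
    have "card (insert i F0) + 1 + kbar \<le> s"
    proof (rule main_step[OF rm0 i arg ns c0 rm1])
      fix j assume j: "j \<in> insert i F0"
      have "last (ds0 @ [Q b0 - Q b1]) / 2 \<le> drop_val Q b1 j - Q b1"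
        using exit_drops[of "insert i F0" b1 "ds0 @ [Q b0 - Q b1]" j] ex j unfolding True S1 by blast
      thus "(Q b0 - Q b1) / 2 \<le> drop_val Q b1 j - Q b1" by simp
    qed
    thus ?thesis using gS drops True unfolding Inv_def S S1 by auto
  next
    case False
    hence "card F + 1 \<le> card (insert i F0)" using alt unfolding S S1 by auto
    thus ?thesis using gS drops c0 cF1 unfolding Inv_def S by auto
  qed
qed

lemma reach_inv:
  assumes "(gdt_iter Q g \<epsilon>)\<^sup>*\<^sup>* ({}, 0, []) S"
  shows "Inv S"
  using assms
proof (induction rule: rtranclp_induct)
  case base
  have "restr_min Q {} 0" unfolding restr_min_def
  proof (intro conjI allI impI)
    fix b' :: "real^'n" assume "supp b' \<subseteq> {}"
    hence "b' = 0" by (auto simp: supp_def vec_eq_iff)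
    thus "Q 0 \<le> Q b'" by simp
  qed (auto simp: supp_def)
  moreover have "1 + kbar \<le> s"
  proof -
    have "0 \<le> (real kbar + 1) * ((sqrt (hi / lo) + 1) * (2 * h1 / lo))\<^sup>2" by simp
    thus ?thesis using scond by linarith
  qed
  ultimately show ?case unfolding Inv_def good_def by auto
next
  case (step S S')
  then show ?case using iter_inv by blast
qed

end

context foba begin

lemma term_bound:
  fixes l ee x :: real
  assumes hl: "l > 0" and he: "ee > 0" and x: "0 \<le> x"
  shows "ee*x - l/2*x\<^sup>2 \<le> (if x < 2* sqrt 2*ee/l then ee\<^sup>2/(2*l) else - (ee\<^sup>2/(2*l)))"
proof (cases "x < 2* sqrt 2*ee/l")
  case True
  have "ee*x - (l/2)*x\<^sup>2 \<le> ee\<^sup>2/(4*(l/2))" by (rule sq_bound) (use hl in simp)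
  thus ?thesis using True by simp
next
  case False
  have s2: "1.4 \<le> sqrt 2" by (rule real_le_rsqrt) (simp add: power2_eq_square)
  define u where "u = l * x"
  have "2* sqrt 2*ee \<le> u" using False hl by (simp add: u_def field_simps)
  moreover have "2.8 * ee \<le> 2* sqrt 2*ee" using s2 he by simp
  ultimately have u: "2.8 * ee \<le> u" by linarith
  have "2.8*ee * (0.8*ee) \<le> u * (u - 2*ee)" using u he by (intro mult_mono) auto
  moreover have "ee\<^sup>2 \<le> 2.8*ee * (0.8*ee)" using he by (simp add: power2_eq_square)
  moreover have "u * (u - 2*ee) = u\<^sup>2 - 2*ee*u" by (simp add: power2_eq_square algebra_simps)
  ultimately have "0 \<le> u\<^sup>2 - 2*ee*u - ee\<^sup>2" by linarith
  hence "0 \<le> (l*x)\<^sup>2 - 2*ee*(l*x) - ee\<^sup>2" by (simp add: u_def)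
  hence m: "2*l*(ee*x - l/2*x\<^sup>2) \<le> 2*l*(- (ee\<^sup>2/(2*l)))" using hl
    by (simp add: power2_eq_square algebra_simps)
  have "ee*x - l/2*x\<^sup>2 \<le> - (ee\<^sup>2/(2*l))" by (rule mult_left_le_imp_le[OF m]) (use hl in simp)
  thus ?thesis using False by simp
qed


lemma final:
  assumes I: "Inv (F, b, ds)" and stp: "gdt_stop g \<epsilon> b"
  shows "let \<gamma> = 2 * sqrt 2 * \<epsilon> / lo;
             Fbar = supp bb;
             \<Delta> = card {j \<in> Fbar - F. \<bar>bb $ j\<bar> < \<gamma>}
         in (norm (b - bb))\<^sup>2 \<le> 8 * \<epsilon>\<^sup>2 / lo\<^sup>2 * real \<Delta>
          \<and> Q b - Q bb \<le> \<epsilon>\<^sup>2 / lo * real \<Delta>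
          \<and> lo\<^sup>2 / (8 * h1\<^sup>2) * real (card (F - Fbar)) \<le> real (card (Fbar - F))
          \<and> card (Fbar - F) \<le> 2 * \<Delta>"
proof -
  define \<gamma> where "\<gamma> = 2 * sqrt 2 * \<epsilon> / lo"
  let ?N = "supp bb - F" let ?P = "F - supp bb"
  define NS where "NS = {j \<in> ?N. \<bar>bb $ j\<bar> < \<gamma>}"
  define NL where "NL = ?N \<inter> - {j. \<bar>bb $ j\<bar> < \<gamma>}"
  define c where "c = \<epsilon>\<^sup>2 / (2*lo)"
  have lo: "lo > 0" and h1: "h1 > 0" using pos by auto
  have e: "\<epsilon> > 0" by (rule eps_pos)
  have cpos: "c > 0" using lo e by (simp add: c_def)
  have rm: "restr_min Q F b" and len: "length ds = card F" and dsb: "\<forall>x\<in>set ds. \<epsilon>\<^sup>2 / (2*h1) \<le> x"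
    and cs: "card F + kbar \<le> s" and drops: "F \<noteq> {} \<longrightarrow> (\<forall>j\<in>F. last ds / 2 \<le> drop_val Q b j - Q b)"
    using I unfolding Inv_def good_def by auto
  have bz: "\<And>j. j \<notin> F \<Longrightarrow> b $ j = 0" using rm by (auto simp: restr_min_def supp_def)
  have bbz: "\<And>j. j \<notin> supp bb \<Longrightarrow> bb $ j = 0" by (auto simp: supp_def)
  have gl: "\<And>j. \<bar>g b $ j\<bar> \<le> \<epsilon>"
    using stp component_le_infnorm_cart[of "g b"] unfolding gdt_stop_def by (meson less_imp_le order_trans)
  have bigF: "\<epsilon>\<^sup>2 / (2 * h1\<^sup>2) \<le> (b$j)\<^sup>2" if j: "j \<in> F" for j
  proof -
    have Fne: "F \<noteq> {}" using j by auto
    have "ds \<noteq> []" using len j by (auto simp: card_gt_0_iff)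
    hence "last ds \<in> set ds" by simp
    hence l: "\<epsilon>\<^sup>2 / (2*h1) \<le> last ds" using dsb by blast
    have "last ds / 2 \<le> drop_val Q b j - Q b" using drops Fne j by blast
    hence "last ds / 2 \<le> h1/2 * (b$j)\<^sup>2" using drop_le[OF rm j] by linarith
    hence "\<epsilon>\<^sup>2 / (2*h1) \<le> h1 * (b$j)\<^sup>2" using l by linarith
    thus ?thesis using h1 by (simp add: field_simps power2_eq_square)
  qed
  have bigP: "2 * infnorm (g bb) / lo \<le> \<bar>b$j\<bar>" if "j \<in> F - supp bb" for j
    by (rule big_of_sq[OF bigF]) (use that in auto)
  have glN: "\<bar>g b $ j\<bar> \<le> \<epsilon>" if "j \<in> supp bb - F" for j using gl by blast
  have S1: "lo * (norm (b - bb))\<^sup>2 \<le> (\<Sum>j\<in>?N. \<epsilon> * \<bar>b$j - bb$j\<bar>) + lo/2 * (\<Sum>j\<in>?P. (b$j - bb$j)\<^sup>2)"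
   and S2: "Q b - Q bb \<le> (\<Sum>j\<in>?N. \<epsilon> * \<bar>b$j - bb$j\<bar>) - lo/2 * (norm (b - bb))\<^sup>2"
    using static[OF rm cs bigP glN] by auto
  have ns2: "(\<Sum>j\<in>?N. (b$j - bb$j)\<^sup>2) + (\<Sum>j\<in>?P. (b$j - bb$j)\<^sup>2) \<le> (norm (b - bb))\<^sup>2"
    using norm_split[of ?N ?P "b - bb"] by auto
  define SN where "SN = (\<Sum>j\<in>?N. (b$j - bb$j)\<^sup>2)"
  define SP where "SP = (\<Sum>j\<in>?P. (b$j - bb$j)\<^sup>2)"
  define AN where "AN = (\<Sum>j\<in>?N. \<epsilon> * \<bar>b$j - bb$j\<bar>)"
  define D where "D = (norm (b - bb))\<^sup>2"
  have D0: "0 \<le> D" by (simp add: D_def)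
  have "lo * (SN + SP) \<le> lo * D" using ns2 lo unfolding SN_def SP_def D_def by (intro mult_left_mono) auto
  hence a: "lo/2 * D \<le> AN - lo/2 * SN" using S1 unfolding SN_def[symmetric] SP_def[symmetric] AN_def[symmetric] D_def[symmetric]
    by (simp add: algebra_simps)
  have SP0: "0 \<le> SP" unfolding SP_def by (simp add: sum_nonneg)
  have SN0: "0 \<le> SN" unfolding SN_def by (simp add: sum_nonneg)
  have SND: "SN \<le> D" using ns2 SP0 unfolding SN_def[symmetric] SP_def[symmetric] D_def[symmetric] by linarith
  have SPD: "SP \<le> D" using ns2 SN0 unfolding SN_def[symmetric] SP_def[symmetric] D_def[symmetric] by linarith
  have "lo * SN \<le> lo * D" using SND lo by (intro mult_left_mono) auto
  hence b2: "Q b - Q bb \<le> AN - lo/2 * SN" using S2 unfolding AN_def[symmetric] D_def[symmetric] by simp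
  have AN': "AN = (\<Sum>j\<in>?N. \<epsilon> * \<bar>bb$j\<bar>)" unfolding AN_def
    by (rule sum.cong) (auto simp: bz)
  have SN': "SN = (\<Sum>j\<in>?N. \<bar>bb$j\<bar>\<^sup>2)" unfolding SN_def
    by (rule sum.cong) (auto simp: bz)
  have "AN - lo/2 * SN = (\<Sum>j\<in>?N. \<epsilon> * \<bar>bb$j\<bar> - lo/2 * \<bar>bb$j\<bar>\<^sup>2)"
    unfolding AN' SN' by (simp add: sum_subtractf sum_distrib_left)
  also have "\<dots> \<le> (\<Sum>j\<in>?N. if \<bar>bb$j\<bar> < \<gamma> then c else - c)"
  proof (rule sum_mono)
    fix j assume "j \<in> ?N"
    show "\<epsilon> * \<bar>bb$j\<bar> - lo/2 * \<bar>bb$j\<bar>\<^sup>2 \<le> (if \<bar>bb$j\<bar> < \<gamma> then c else - c)"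
      unfolding \<gamma>_def c_def by (rule term_bound[OF lo e abs_ge_zero])
  qed
  also have "\<dots> = (\<Sum>j\<in>?N \<inter> {j. \<bar>bb$j\<bar> < \<gamma>}. c) + (\<Sum>j\<in>?N \<inter> - {j. \<bar>bb$j\<bar> < \<gamma>}. - c)"
    by (rule sum.If_cases) simp
  also have "?N \<inter> {j. \<bar>bb$j\<bar> < \<gamma>} = NS" by (auto simp: NS_def)
  also have "(\<Sum>j\<in>NS. c) + (\<Sum>j\<in>?N \<inter> - {j. \<bar>bb$j\<bar> < \<gamma>}. - c) = card NS * c - card NL * c"
    by (simp add: NL_def)
  finally have H: "AN - lo/2 * SN \<le> card NS * c - card NL * c" .
  have cN: "card ?N = card NS + card NL"
  proof -
    have "?N = NS \<union> NL" "NS \<inter> NL = {}" by (auto simp: NS_def NL_def)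
    thus ?thesis by (simp add: card_Un_disjoint)
  qed
  have c1: "D \<le> card NS * \<epsilon>\<^sup>2 / lo\<^sup>2"
  proof -
    have "0 \<le> card NL * c" using cpos by simp
    hence "lo/2 * D \<le> card NS * c" using a H by linarith
    thus ?thesis using lo by (simp add: c_def field_simps power2_eq_square)
  qed
  have c4: "card NL \<le> card NS"
  proof -
    have "0 \<le> lo/2 * D" using lo D0 by simp
    hence "card NL * c \<le> card NS * c" using a H by linarith
    thus ?thesis using cpos by simp
  qed
  have sP: "card ?P * (\<epsilon>\<^sup>2 / (2 * h1\<^sup>2)) \<le> SP"
  proof -
    have "card ?P * (\<epsilon>\<^sup>2 / (2 * h1\<^sup>2)) = (\<Sum>j\<in>?P. \<epsilon>\<^sup>2 / (2 * h1\<^sup>2))" by simp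
    also have "\<dots> \<le> SP" unfolding SP_def by (rule sum_mono) (use bigF bbz in auto)
    finally show ?thesis .
  qed
  have "card ?P * (\<epsilon>\<^sup>2 / (2 * h1\<^sup>2)) \<le> card ?N * \<epsilon>\<^sup>2 / lo\<^sup>2"
  proof -
    have "card NS * \<epsilon>\<^sup>2 / lo\<^sup>2 \<le> card ?N * \<epsilon>\<^sup>2 / lo\<^sup>2"
      using cN lo by (intro divide_right_mono mult_right_mono) auto
    thus ?thesis using sP SPD c1 by linarith
  qed
  hence c3: "lo\<^sup>2 / (8 * h1\<^sup>2) * card ?P \<le> card ?N"
  proof -
    assume A: "card ?P * (\<epsilon>\<^sup>2 / (2 * h1\<^sup>2)) \<le> card ?N * \<epsilon>\<^sup>2 / lo\<^sup>2"
    have "card ?P * (\<epsilon>\<^sup>2 / (2 * h1\<^sup>2)) * (lo\<^sup>2 / \<epsilon>\<^sup>2) \<le> card ?N * \<epsilon>\<^sup>2 / lo\<^sup>2 * (lo\<^sup>2 / \<epsilon>\<^sup>2)"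
      using A lo e by (intro mult_right_mono) auto
    hence "lo\<^sup>2 / (2 * h1\<^sup>2) * card ?P \<le> card ?N" using lo e by (simp add: field_simps)
    moreover have "lo\<^sup>2 / (8 * h1\<^sup>2) * card ?P \<le> lo\<^sup>2 / (2 * h1\<^sup>2) * card ?P"
      using h1 by (intro mult_right_mono) (auto simp: field_simps)
    ultimately show ?thesis by linarith
  qed
  have c2: "Q b - Q bb \<le> \<epsilon>\<^sup>2 / lo * card NS"
  proof -
    have "card NL * c \<ge> 0" using cpos by simp
    hence "Q b - Q bb \<le> card NS * c" using b2 H by linarith
    also have "\<dots> \<le> \<epsilon>\<^sup>2 / lo * card NS" using lo e by (simp add: c_def field_simps)
    finally show ?thesis .
  qed
  have c1': "D \<le> 8 * \<epsilon>\<^sup>2 / lo\<^sup>2 * card NS"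
  proof -
    have "card NS * \<epsilon>\<^sup>2 / lo\<^sup>2 \<le> 8 * \<epsilon>\<^sup>2 / lo\<^sup>2 * card NS" using lo by (simp add: field_simps)
    thus ?thesis using c1 by linarith
  qed
  show ?thesis unfolding Let_def \<gamma>_def[symmetric] NS_def[symmetric]
    using c1' c2 c3 c4 cN unfolding D_def by simp
qed

end

theorem theorem5:
  fixes Q :: "real^'n \<Rightarrow> real" and g :: "real^'n \<Rightarrow> real^'n"
    and \<rho>m \<rho>p :: "nat \<Rightarrow> real" and s :: nat and \<epsilon> :: real
    and \<beta>bar :: "real^'n" and kbar :: nat
    and F :: "'n set" and \<beta> :: "real^'n"
  assumes convex: "convex_on UNIV Q"
    and grad: "\<And>x. (Q has_derivative (\<lambda>h. g x \<bullet> h)) (at x)"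
    and grad_cont: "continuous_on UNIV g"
    and minex: "\<And>F'. \<exists>b. restr_min Q F' b"
    and rsc_s: "rsc Q g s (\<rho>m s) (\<rho>p s)"
    and rsc_1: "rsc Q g 1 (\<rho>m 1) (\<rho>p 1)"
    and kbar_def: "kbar = card (supp \<beta>bar)"
    and \<beta>bar_opt: "\<And>b. card (supp b) \<le> kbar \<Longrightarrow> Q \<beta>bar \<le> Q b"
    and s_pos: "s > 0"
    and s_cond: "real s - real kbar >
       (real kbar + 1) * ((sqrt (\<rho>p s / \<rho>m s) + 1) * (2 * \<rho>p 1 / \<rho>m s))\<^sup>2"
    and eps_cond: "\<epsilon> > 2 * sqrt 2 * \<rho>p 1 / \<rho>m s * infnorm (g \<beta>bar)"
    and run: "foba_gdt_output Q g \<epsilon> F \<beta>"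
  shows "let \<gamma> = 2 * sqrt 2 * \<epsilon> / \<rho>m s;
             Fbar = supp \<beta>bar;
             \<Delta> = card {j \<in> Fbar - F. \<bar>\<beta>bar $ j\<bar> < \<gamma>}
         in (norm (\<beta> - \<beta>bar))\<^sup>2 \<le> 8 * \<epsilon>\<^sup>2 / (\<rho>m s)\<^sup>2 * real \<Delta>
          \<and> Q \<beta> - Q \<beta>bar \<le> \<epsilon>\<^sup>2 / \<rho>m s * real \<Delta>
          \<and> (\<rho>m s)\<^sup>2 / (8 * (\<rho>p 1)\<^sup>2) * real (card (F - Fbar)) \<le> real (card (Fbar - F))
          \<and> card (Fbar - F) \<le> 2 * \<Delta>"
proof -
  interpret foba Q g s "\<rho>m s" "\<rho>p s" "\<rho>m 1" "\<rho>p 1" \<epsilon> \<beta>bar kbar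
    by unfold_locales (use grad rsc_s rsc_1 kbar_def \<beta>bar_opt s_pos s_cond eps_cond in auto)
  from run obtain ds where r: "(gdt_iter Q g \<epsilon>)\<^sup>*\<^sup>* ({}, 0, []) (F, \<beta>, ds)"
    and st: "gdt_stop g \<epsilon> \<beta>" unfolding foba_gdt_output_def by blast
  show ?thesis using final[OF reach_inv[OF r] st] .
qed

end
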